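(* Let $n\ge 4$ and consider the 2NC-TAP instance in which $T=K_{1,n-1}$ is a star with center $r$ and leaves $w_1,\dots,w_{n-1}$ (tree edges of cost $0$), and the links are the $n-1$ unit-cost edges $w_1w_2,w_2w_3,\dots,w_{n-2}w_{n-1},w_{n-1}w_1$ forming a cycle on the leaves. Then every 2-node connected spanning subgraph of this graph has cost at least $n-2$, while the vector $\hat x$ with $\hat x_e=1$ on tree edges and $\hat x_\ell=\frac12$ on each link is a feasible solution of the set-pairs LP of cost $\frac{n-1}{2}$. Hence the integrality ratio of the set-pairs LP for the min-cost 2NCSS problem is at least $\frac{2(n-2)}{n-1}=2-\frac{2}{n-1}$.
   Context: For a graph $G=(V,E)$ with nonnegative edge costs $c$, the set-pairs LP for the min-cost 2-node connected spanning subgraph (2NCSS) problem is: minimize $\sum_{e\in E}c_ex_e$ subject to $x(\delta(S))\ge 2$ for all $\emptyset\ne S\subsetneq V$; for every node $w\in V$ and every $\emptyset\ne S\subsetneq V\setminus\{w\}$, $\sum\{x_e: e=uv\in E,\ u\in S,\ v\in (V\setminus\{w\})\setminus S\}\ge 1$; and $0\le x\le 1$. Here $\delta(S)$ is the set of edges with exactly one end node in $S$ and $x(F)=\sum_{e\in F}x_e$. The integrality ratio is the ratio of the minimum cost of a 2-node connected spanning subgraph to the LP optimum. *)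

theory Defs
  imports Complex_Main
begin

text \<open>Undirected graphs: vertex set V :: 'a set, edges are two-element sets {u,v}.\<close>

definition adj_rel :: "'a set \<Rightarrow> 'a set set \<Rightarrow> ('a \<times> 'a) set" where
  "adj_rel V F = {(u, v). u \<in> V \<and> v \<in> V \<and> u \<noteq> v \<and> {u, v} \<in> F}"

definition connected_on :: "'a set \<Rightarrow> 'a set set \<Rightarrow> bool" where
  "connected_on V F \<longleftrightarrow> (\<forall>u\<in>V. \<forall>v\<in>V. (u, v) \<in> (adj_rel V F)\<^sup>*)"

definition two_node_connected :: "'a set \<Rightarrow> 'a set set \<Rightarrow> bool" where
  "two_node_connected V F \<longleftrightarrow>
     finite V \<and> card V \<ge> 3 \<and>
     (\<forall>e\<in>F. \<exists>u v. e = {u, v} \<and> u \<noteq> v \<and> u \<in> V \<and> v \<in> V) \<and>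
     connected_on V F \<and> (\<forall>w\<in>V. connected_on (V - {w}) F)"

definition is_2NCSS :: "'a set \<Rightarrow> 'a set set \<Rightarrow> 'a set set \<Rightarrow> bool" where
  "is_2NCSS V E F \<longleftrightarrow> F \<subseteq> E \<and> two_node_connected V F"

definition delta :: "'a set set \<Rightarrow> 'a set \<Rightarrow> 'a set set" where
  "delta E S = {e \<in> E. card (e \<inter> S) = 1}"

definition delta_w :: "'a set \<Rightarrow> 'a set set \<Rightarrow> 'a \<Rightarrow> 'a set \<Rightarrow> 'a set set" where
  "delta_w V E w S = {e \<in> E. \<exists>u v. e = {u, v} \<and> u \<in> S \<and> v \<in> (V - {w}) - S}"

definition set_pairs_feasible :: "'a set \<Rightarrow> 'a set set \<Rightarrow> ('a set \<Rightarrow> real) \<Rightarrow> bool" where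
  "set_pairs_feasible V E x \<longleftrightarrow>
     (\<forall>S. S \<noteq> {} \<and> S \<subset> V \<longrightarrow> sum x (delta E S) \<ge> 2) \<and>
     (\<forall>w\<in>V. \<forall>S. S \<noteq> {} \<and> S \<subset> V - {w} \<longrightarrow> sum x (delta_w V E w S) \<ge> 1) \<and>
     (\<forall>e\<in>E. 0 \<le> x e \<and> x e \<le> 1)"

definition lp_cost :: "'a set set \<Rightarrow> ('a set \<Rightarrow> real) \<Rightarrow> ('a set \<Rightarrow> real) \<Rightarrow> real" where
  "lp_cost E c x = (\<Sum>e\<in>E. c e * x e)"

definition opt_2NCSS :: "'a set \<Rightarrow> 'a set set \<Rightarrow> ('a set \<Rightarrow> real) \<Rightarrow> real" where
  "opt_2NCSS V E c = Inf {sum c F | F. is_2NCSS V E F}"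

definition opt_set_pairs_LP :: "'a set \<Rightarrow> 'a set set \<Rightarrow> ('a set \<Rightarrow> real) \<Rightarrow> real" where
  "opt_set_pairs_LP V E c = Inf {lp_cost E c x | x. set_pairs_feasible V E x}"

definition integrality_ratio :: "'a set \<Rightarrow> 'a set set \<Rightarrow> ('a set \<Rightarrow> real) \<Rightarrow> real" where
  "integrality_ratio V E c = opt_2NCSS V E c / opt_set_pairs_LP V E c"

text \<open>The instance: vertices 0..n-1, center r = 0, leaves w_i = i (1 \<le> i \<le> n-1).\<close>
definition star_edges :: "nat \<Rightarrow> nat set set" where
  "star_edges n = {{0, i} | i. 1 \<le> i \<and> i \<le> n - 1}"

definition cycle_links :: "nat \<Rightarrow> nat set set" where
  "cycle_links n = {{i, i + 1} | i. 1 \<le> i \<and> i \<le> n - 2} \<union> {{n - 1, 1}}"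

definition inst_edges :: "nat \<Rightarrow> nat set set" where
  "inst_edges n = star_edges n \<union> cycle_links n"

definition inst_cost :: "nat \<Rightarrow> nat set \<Rightarrow> real" where
  "inst_cost n e = (if e \<in> cycle_links n then 1 else 0)"

definition x_hat :: "nat \<Rightarrow> nat set \<Rightarrow> real" where
  "x_hat n e = (if e \<in> star_edges n then 1 else if e \<in> cycle_links n then 1/2 else 0)"

end

theory Submission imports Defs begin

definition nxt :: "nat \<Rightarrow> nat \<Rightarrow> nat" where
  "nxt n i = (if i = n - 1 then 1 else i + 1)"
definition lnk :: "nat \<Rightarrow> nat \<Rightarrow> nat set" where
  "lnk n i = {i, nxt n i}"

lemma cycle_links_eq: "n \<ge> 4 \<Longrightarrow> cycle_links n = lnk n ` {1..n-1}"
proof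
  assume n: "n \<ge> 4"
  show "cycle_links n \<subseteq> lnk n ` {1..n-1}"
  proof
    fix e assume "e \<in> cycle_links n"
    then consider (a) i where "e = {i, i+1}" "1 \<le> i" "i \<le> n - 2" | (b) "e = {n-1, 1}"
      unfolding cycle_links_def by blast
    thus "e \<in> lnk n ` {1..n-1}"
    proof cases
      case a
      hence "e = lnk n i" using n unfolding lnk_def nxt_def by auto
      thus ?thesis using a n by auto
    next
      case b
      hence "e = lnk n (n-1)" unfolding lnk_def nxt_def by auto
      thus ?thesis using n by auto
    qed
  qed
  show "lnk n ` {1..n-1} \<subseteq> cycle_links n"
  proof
    fix e assume "e \<in> lnk n ` {1..n-1}"
    then obtain i where i: "i \<in> {1..n-1}" "e = lnk n i" by auto
    show "e \<in> cycle_links n"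
    proof (cases "i = n - 1")
      case True thus ?thesis using i unfolding lnk_def nxt_def cycle_links_def by auto
    next
      case False
      hence "e = {i, i+1}" "1 \<le> i" "i \<le> n - 2" using i unfolding lnk_def nxt_def by auto
      thus ?thesis unfolding cycle_links_def by blast
    qed
  qed
qed

lemma star_edges_eq: "star_edges n = (\<lambda>i. {0,i}) ` {1..n-1}"
  unfolding star_edges_def by auto

lemma nxt_range: "n \<ge> 4 \<Longrightarrow> i \<in> {1..n-1} \<Longrightarrow> nxt n i \<in> {1..n-1} \<and> nxt n i \<noteq> i"
  unfolding nxt_def by auto

lemma lnk_inj: assumes n: "n \<ge> 4" shows "inj_on (lnk n) {1..n-1}"
proof (rule inj_onI)
  fix i j assume i: "i \<in> {1..n-1}" and j: "j \<in> {1..n-1}" and e: "lnk n i = lnk n j"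
  show "i = j"
  proof (rule ccontr)
    assume ne: "i \<noteq> j"
    from e have "{i, nxt n i} = {j, nxt n j}" unfolding lnk_def .
    with ne have ij1: "i = nxt n j" and ij2: "nxt n i = j" by (auto simp: doubleton_eq_iff)
    have A: "nxt n i = (if i = n - 1 then 1 else i + 1)" "nxt n j = (if j = n - 1 then 1 else j + 1)"
      unfolding nxt_def by simp_all
    show False
    proof (cases "i = n - 1")
      case True
      hence "nxt n i = 1" using A(1) by simp
      hence j1: "j = 1" using ij2 by linarith
      hence "j \<noteq> n - 1" using n by linarith
      hence "nxt n j = j + 1" using A(2) by simp
      thus False using ij1 True n j1 by linarith
    next
      case False
      hence ni: "nxt n i = i + 1" using A(1) by simp
      show False
      proof (cases "j = n - 1")
        case True
        hence "nxt n j = 1" using A(2) by simp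
        hence "i = 1" using ij1 by linarith
        thus False using ij2 ni True n by linarith
      next
        case False
        hence "nxt n j = j + 1" using A(2) by simp
        thus False using ij1 ij2 ni by linarith
      qed
    qed
  qed
qed

lemma card_links: "n \<ge> 4 \<Longrightarrow> card (cycle_links n) = n - 1"
  using cycle_links_eq lnk_inj card_image by fastforce

lemma finite_E: "finite (inst_edges n)"
proof -
  have "finite (cycle_links n)" unfolding cycle_links_def
    by (rule finite_subset[of _ "(\<lambda>i. {i,i+1}) ` {1..n-2} \<union> {{n-1,1}}"]) auto
  thus ?thesis unfolding inst_edges_def star_edges_eq by auto
qed

lemma zero_notin_link: "n \<ge> 4 \<Longrightarrow> e \<in> cycle_links n \<Longrightarrow> 0 \<notin> e"
  unfolding cycle_links_def by auto

lemma star_not_link: "n \<ge> 4 \<Longrightarrow> e \<in> star_edges n \<Longrightarrow> e \<notin> cycle_links n"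
  using zero_notin_link unfolding star_edges_def by blast

lemma closure_nxt:
  assumes n: "n \<ge> 4" and a: "a \<in> {1..n-1}" and Pa: "P a"
    and cl: "\<forall>i\<in>{1..n-1}. P i \<longrightarrow> P (nxt n i)"
  shows "\<forall>k\<in>{1..n-1}. P k"
proof -
  have 1: "a \<le> k \<Longrightarrow> k \<le> n - 1 \<Longrightarrow> P k" for k
  proof (induction k)
    case 0 thus ?case using a Pa by auto
  next
    case (Suc k)
    show ?case
    proof (cases "Suc k = a")
      case True thus ?thesis using Pa by simp
    next
      case False
      hence "a \<le> k" using Suc by auto
      hence "P k" using Suc by auto
      moreover have "nxt n k = Suc k" using Suc unfolding nxt_def by auto
      moreover have "k \<in> {1..n-1}" using \<open>a \<le> k\<close> a Suc by auto
      ultimately show ?thesis using cl by metis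
    qed
  qed
  have "P (n-1)" using 1 a by auto
  moreover have "n - 1 \<in> {1..n-1}" using n by auto
  ultimately have "P (nxt n (n-1))" using cl by blast
  hence P1: "P 1" unfolding nxt_def by simp
  have "1 \<le> k \<Longrightarrow> k \<le> n - 1 \<Longrightarrow> P k" for k
  proof (induction k)
    case 0 thus ?case by auto
  next
    case (Suc k)
    show ?case
    proof (cases "k = 0")
      case True thus ?thesis using P1 by simp
    next
      case False
      hence "P k" using Suc by auto
      moreover have "nxt n k = Suc k" using Suc unfolding nxt_def by auto
      moreover have "k \<in> {1..n-1}" using False Suc by auto
      ultimately show ?thesis using cl by metis
    qed
  qed
  thus ?thesis by auto
qed

lemma exists_cross:
  assumes n: "n \<ge> 4" and a: "a \<in> {1..n-1}" "P a" and b: "b \<in> {1..n-1}" "\<not> P b"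
  shows "\<exists>i\<in>{1..n-1}. P i \<and> \<not> P (nxt n i)"
  using closure_nxt[OF n a(1), of P] a(2) b by blast

lemma two_cross:
  assumes n: "n \<ge> 4" and A: "A \<subseteq> {1..n-1}" "A \<noteq> {}" "\<not> {1..n-1} \<subseteq> A"
  shows "\<exists>i j. i \<in> {1..n-1} \<and> j \<in> {1..n-1} \<and> i \<in> A \<and> nxt n i \<notin> A \<and> j \<notin> A \<and> nxt n j \<in> A"
proof -
  obtain a where a: "a \<in> A" using A by auto
  obtain b where b: "b \<in> {1..n-1}" "b \<notin> A" using A(3) by blast
  have aa: "a \<in> {1..n-1}" using a A by auto
  obtain i where "i \<in> {1..n-1}" "i \<in> A" "nxt n i \<notin> A"
    using exists_cross[OF n aa _ b(1), of "\<lambda>x. x \<in> A"] a b by auto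
  moreover obtain j where "j \<in> {1..n-1}" "j \<notin> A" "nxt n j \<in> A"
    using exists_cross[OF n b(1) _ aa, of "\<lambda>x. x \<notin> A"] a aa b by auto
  ultimately show ?thesis by blast
qed

lemma cut_lemma:
  assumes c: "connected_on V F" and S: "S \<subseteq> V" and u: "u \<in> S" and v: "v \<in> V - S"
  shows "\<exists>p q. p \<in> S \<and> q \<in> V - S \<and> {p, q} \<in> F"
proof (rule ccontr)
  assume no: "\<not> ?thesis"
  have "(u, v) \<in> (adj_rel V F)\<^sup>*" using c u v S unfolding connected_on_def by blast
  hence "v \<in> S"
  proof (induction rule: rtrancl_induct)
    case base thus ?case using u .
  next
    case (step y z) thus ?case using no unfolding adj_rel_def by blast
  qed
  thus False using v by auto
qed

lemma lower_bound:
  assumes n: "n \<ge> 4" and F: "is_2NCSS {0..<n} (inst_edges n) F"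
  shows "sum (inst_cost n) F \<ge> real n - 2"
proof -
  let ?L = "{1..n-1}"
  define M where "M = {i \<in> ?L. lnk n i \<notin> F}"
  have FE: "F \<subseteq> inst_edges n" and con: "connected_on ({0..<n} - {0}) F"
    using F unfolding is_2NCSS_def two_node_connected_def by auto
  have key: False if ab: "a \<in> M" "b \<in> M" "a < b" for a b
  proof -
    have a: "1 \<le> a" "a \<le> n-1" "lnk n a \<notin> F" and b: "1 \<le> b" "b \<le> n-1" "lnk n b \<notin> F"
      using ab unfolding M_def by auto
    let ?S = "{a+1..b}"
    have sub: "?S \<subseteq> {0..<n} - {0}" using b n by auto
    have u: "a+1 \<in> ?S" using ab(3) by auto
    have v: "1 \<in> ({0..<n} - {0}) - ?S" using a n by auto
    obtain p q where pq: "p \<in> ?S" "q \<in> ({0..<n} - {0}) - ?S" "{p,q} \<in> F"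
      using cut_lemma[OF con sub u v] by blast
    have "{p,q} \<in> inst_edges n" using pq FE by auto
    then consider (s) "{p,q} \<in> star_edges n" | (l) "{p,q} \<in> cycle_links n"
      unfolding inst_edges_def by auto
    thus False
    proof cases
      case s
      then obtain i where "{p,q} = {0,i}" unfolding star_edges_def by auto
      hence "p = 0 \<or> q = 0" by (auto simp: doubleton_eq_iff)
      thus False using pq a by auto
    next
      case l
      then obtain i where i: "i \<in> ?L" "{p,q} = lnk n i" using cycle_links_eq[OF n] by auto
      have "i = a \<or> i = b"
      proof (cases "i = n - 1")
        case True
        hence "{p,q} = {n-1, 1}" using i unfolding lnk_def nxt_def by simp
        thus ?thesis using pq a b True by (auto simp: doubleton_eq_iff)
      next
        case False
        hence "{p,q} = {i, i+1}" using i unfolding lnk_def nxt_def by simp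
        thus ?thesis using pq a b by (auto simp: doubleton_eq_iff)
      qed
      thus False using i pq a b by auto
    qed
  qed
  have finM: "finite M" unfolding M_def by (rule finite_subset[of _ "{1..n-1}"]) auto
  have "card M \<le> 1"
    using card_le_Suc0_iff_eq[OF finM] key by (metis One_nat_def linorder_neqE_nat)
  have finF: "finite F" using FE finite_E finite_subset by blast
  have "sum (inst_cost n) F = sum (inst_cost n) (F \<inter> cycle_links n) + sum (inst_cost n) (F - cycle_links n)"
    using finF by (metis Diff_disjoint Int_Diff_Un Int_Diff_disjoint Int_commute sum.union_disjoint finite_Diff finite_Int)
  also have "sum (inst_cost n) (F - cycle_links n) = 0" unfolding inst_cost_def by simp
  also have "sum (inst_cost n) (F \<inter> cycle_links n) = card (F \<inter> cycle_links n)"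
    unfolding inst_cost_def by simp
  finally have eq: "sum (inst_cost n) F = card (F \<inter> cycle_links n)" by simp
  have sub: "lnk n ` (?L - M) \<subseteq> F \<inter> cycle_links n"
    using cycle_links_eq[OF n] unfolding M_def by auto
  have "card (lnk n ` (?L - M)) = card (?L - M)"
    using lnk_inj[OF n] by (meson Diff_subset card_image inj_on_subset)
  also have "card (?L - M) \<ge> card ?L - card M" by (rule diff_card_le_card_Diff[OF finM])
  finally have "card (lnk n ` (?L - M)) \<ge> n - 2" using \<open>card M \<le> 1\<close> by auto
  moreover have "card (lnk n ` (?L - M)) \<le> card (F \<inter> cycle_links n)"
    using sub finF by (meson card_mono finite_Int)
  ultimately have "card (F \<inter> cycle_links n) \<ge> n - 2" by linarith
  hence "real (card (F \<inter> cycle_links n)) \<ge> real n - 2" using n by linarith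
  thus ?thesis using eq by simp
qed

lemma lnk_in_E: "n \<ge> 4 \<Longrightarrow> i \<in> {1..n-1} \<Longrightarrow> lnk n i \<in> inst_edges n"
  using cycle_links_eq unfolding inst_edges_def by auto

lemma star_in_E: "k \<in> {1..n-1} \<Longrightarrow> {0,k} \<in> inst_edges n"
  unfolding inst_edges_def star_edges_def by auto

lemma x_star: "n \<ge> 4 \<Longrightarrow> k \<in> {1..n-1} \<Longrightarrow> x_hat n {0,k} = 1"
  unfolding x_hat_def star_edges_def by auto

lemma x_lnk: "n \<ge> 4 \<Longrightarrow> i \<in> {1..n-1} \<Longrightarrow> x_hat n (lnk n i) = 1/2"
proof -
  assume n: "n \<ge> 4" and i: "i \<in> {1..n-1}"
  have "lnk n i \<in> cycle_links n" using cycle_links_eq[OF n] i by auto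
  moreover hence "lnk n i \<notin> star_edges n" using star_not_link[OF n] by blast
  ultimately show ?thesis unfolding x_hat_def by auto
qed

lemma x_nonneg: "0 \<le> x_hat n e" unfolding x_hat_def by auto

lemma lnk_ne_star: "n \<ge> 4 \<Longrightarrow> i \<in> {1..n-1} \<Longrightarrow> lnk n i \<noteq> {0,k}"
proof -
  assume n: "n \<ge> 4" and i: "i \<in> {1..n-1}"
  have "0 \<notin> lnk n i" using nxt_range[OF n i] i unfolding lnk_def by auto
  thus ?thesis by auto
qed

lemma lnk_cross1: "n \<ge> 4 \<Longrightarrow> i \<in> {1..n-1} \<Longrightarrow> i \<in> S \<Longrightarrow> nxt n i \<notin> S
   \<Longrightarrow> lnk n i \<in> delta (inst_edges n) S"
proof -
  assume a: "n \<ge> 4" "i \<in> {1..n-1}" "i \<in> S" "nxt n i \<notin> S"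
  hence "lnk n i \<inter> S = {i}" unfolding lnk_def by auto
  thus ?thesis using lnk_in_E[OF a(1,2)] unfolding delta_def by auto
qed

lemma lnk_cross2: "n \<ge> 4 \<Longrightarrow> i \<in> {1..n-1} \<Longrightarrow> i \<notin> S \<Longrightarrow> nxt n i \<in> S
   \<Longrightarrow> lnk n i \<in> delta (inst_edges n) S"
proof -
  assume a: "n \<ge> 4" "i \<in> {1..n-1}" "i \<notin> S" "nxt n i \<in> S"
  hence "lnk n i \<inter> S = {nxt n i}" unfolding lnk_def by auto
  thus ?thesis using lnk_in_E[OF a(1,2)] unfolding delta_def by auto
qed

lemma star_cross: "k \<in> {1..n-1} \<Longrightarrow> (0 \<in> S \<and> k \<notin> S) \<or> (0 \<notin> S \<and> k \<in> S)
   \<Longrightarrow> {0,k} \<in> delta (inst_edges n) S"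
proof -
  assume a: "k \<in> {1..n-1}" "(0 \<in> S \<and> k \<notin> S) \<or> (0 \<notin> S \<and> k \<in> S)"
  hence "card ({0,k} \<inter> S) = 1" by (cases "0 \<in> S") (auto simp: Int_insert_left)
  thus ?thesis using star_in_E[OF a(1)] unfolding delta_def by auto
qed

lemma sum3: assumes n: "n \<ge> 4" and k: "k \<in> {1..n-1}" and i: "i \<in> {1..n-1}" and j: "j \<in> {1..n-1}"
  and ij: "i \<noteq> j"
  shows "sum (x_hat n) {{0,k}, lnk n i, lnk n j} = 2"
proof -
  have "lnk n i \<noteq> lnk n j" using lnk_inj[OF n] i j ij by (meson inj_on_def)
  moreover have "lnk n i \<noteq> {0,k}" "lnk n j \<noteq> {0,k}" using lnk_ne_star n i j by auto
  ultimately show ?thesis using x_star[OF n k] x_lnk[OF n i] x_lnk[OF n j] by auto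
qed

lemma feas_a:
  assumes n: "n \<ge> 4" and S: "S \<noteq> {}" "S \<subset> {0..<n}"
  shows "sum (x_hat n) (delta (inst_edges n) S) \<ge> 2"
proof -
  let ?L = "{1..n-1}"
  let ?D = "delta (inst_edges n) S"
  have finD: "finite ?D" using finite_E unfolding delta_def by auto
  have mono: "sum (x_hat n) B \<le> sum (x_hat n) ?D" if "B \<subseteq> ?D" for B
    using sum_mono2[OF finD that] x_nonneg by auto
  have L1: "1 \<in> ?L" and L2: "2 \<in> ?L" using n by auto
  have two: "sum (x_hat n) {{0,1},{0,2}} = 2" using x_star[OF n L1] x_star[OF n L2] by (simp add: doubleton_eq_iff)
  let ?A = "S \<inter> ?L"
  have Vsplit: "\<And>x. x \<in> {0..<n} \<longleftrightarrow> x = 0 \<or> x \<in> ?L" using n by auto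
  have SV: "\<And>x. x \<in> S \<Longrightarrow> x = 0 \<or> x \<in> ?L" using S(2) Vsplit by blast
  obtain y where y: "y \<in> {0..<n}" "y \<notin> S" using S(2) by blast
  show ?thesis
  proof (cases "?A = {}")
    case True
    have "0 \<in> S" using S(1) SV True by blast
    moreover have "1 \<notin> S" "2 \<notin> S" using True L1 L2 by blast+
    ultimately have "{{0,1},{0,2}} \<subseteq> ?D" using star_cross[OF L1, of S] star_cross[OF L2, of S] by blast
    from mono[OF this] show ?thesis using two by linarith
  next
    case Ane: False
    show ?thesis
    proof (cases "?L \<subseteq> ?A")
      case True
      have "y \<notin> ?L" using True y(2) by blast
      hence "y = 0" using y(1) by auto
      hence "0 \<notin> S" using y(2) by simp
      moreover have "1 \<in> S" "2 \<in> S" using True L1 L2 by blast+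
      ultimately have "{{0,1},{0,2}} \<subseteq> ?D" using star_cross[OF L1, of S] star_cross[OF L2, of S] by blast
      from mono[OF this] show ?thesis using two by linarith
    next
      case False
      have AL: "?A \<subseteq> ?L" by blast
      obtain i j where ij: "i \<in> ?L" "j \<in> ?L" "i \<in> ?A" "nxt n i \<notin> ?A" "j \<notin> ?A" "nxt n j \<in> ?A"
        using two_cross[OF n AL Ane False] by blast
      have r: "nxt n i \<in> ?L" using nxt_range[OF n ij(1)] by blast
      have ni: "nxt n i \<notin> S" "nxt n j \<in> S" "i \<in> S" "j \<notin> S" using ij r by blast+
      obtain k where k: "k \<in> ?L" "(0 \<in> S \<and> k \<notin> S) \<or> (0 \<notin> S \<and> k \<in> S)"
      proof (cases "0 \<in> S")
        case True
        then obtain k where "k \<in> ?L" "k \<notin> S" using False by blast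
        thus ?thesis using that True by blast
      next
        case f: False
        thus ?thesis using that ij(1) ni(3) by blast
      qed
      have "{{0,k}, lnk n i, lnk n j} \<subseteq> ?D"
        using star_cross[OF k] lnk_cross1[OF n ij(1) ni(3,1)] lnk_cross2[OF n ij(2) ni(4,2)] by blast
      from mono[OF this] have "sum (x_hat n) {{0,k}, lnk n i, lnk n j} \<le> sum (x_hat n) ?D" .
      moreover have "i \<noteq> j" using ni by blast
      ultimately show ?thesis using sum3[OF n k(1) ij(1,2)] by linarith
    qed
  qed
qed

lemma feas_b:
  assumes n: "n \<ge> 4" and w: "w \<in> {0..<n}" and S: "S \<noteq> {}" "S \<subset> {0..<n} - {w}"
  shows "sum (x_hat n) (delta_w {0..<n} (inst_edges n) w S) \<ge> 1"
proof -
  let ?L = "{1..n-1}"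
  let ?V = "{0..<n}"
  let ?D = "delta_w ?V (inst_edges n) w S"
  have finD: "finite ?D" using finite_E unfolding delta_w_def by auto
  have mono: "sum (x_hat n) B \<le> sum (x_hat n) ?D" if "B \<subseteq> ?D" for B
    using sum_mono2[OF finD that] x_nonneg by auto
  have Vsplit: "?V = insert 0 ?L" using n by auto
  show ?thesis
  proof (cases "w = 0")
    case True
    have SL: "S \<subseteq> ?L" using S True Vsplit by auto
    have nsub: "\<not> ?L \<subseteq> S" using S True Vsplit by auto
    obtain i j where ij: "i \<in> ?L" "j \<in> ?L" "i \<in> S" "nxt n i \<notin> S" "j \<notin> S" "nxt n j \<in> S"
      using two_cross[OF n SL S(1) nsub] by blast
    have r: "nxt n i \<in> ?L" "nxt n j \<in> ?L" using nxt_range[OF n] ij by auto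
    have oi: "nxt n i \<in> ?V - {w} - S" using r(1) ij(4) True n by auto
    have oj: "j \<in> ?V - {w} - S" using ij(2,5) True n by auto
    have Di: "lnk n i \<in> ?D" unfolding delta_w_def
      using lnk_in_E[OF n ij(1)] ij(3) oi unfolding lnk_def by blast
    have eqj: "lnk n j = {nxt n j, j}" unfolding lnk_def by (simp add: insert_commute)
    have Dj: "lnk n j \<in> ?D" unfolding delta_w_def
      using lnk_in_E[OF n ij(2)] ij(6) oj eqj by blast
    have ne: "lnk n i \<noteq> lnk n j" using lnk_inj[OF n] ij by (metis inj_on_def)
    have "{lnk n i, lnk n j} \<subseteq> ?D" using Di Dj by blast
    from mono[OF this] have "sum (x_hat n) {lnk n i, lnk n j} \<le> sum (x_hat n) ?D" .
    moreover have "sum (x_hat n) {lnk n i, lnk n j} = 1"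
      using ne x_lnk[OF n ij(1)] x_lnk[OF n ij(2)] by simp
    ultimately show ?thesis by simp
  next
    case False
    obtain k where k: "k \<in> ?L" "{0,k} \<in> ?D"
    proof (cases "0 \<in> S")
      case True
      obtain v where v: "v \<in> ?V - {w} - S" using S(2) by blast
      hence "v \<in> ?L" using True Vsplit by auto
      moreover have "{0,v} \<in> ?D" unfolding delta_w_def using star_in_E[OF \<open>v \<in> ?L\<close>] v True by blast
      ultimately show ?thesis using that by blast
    next
      case f: False
      from S(1) obtain u where u: "u \<in> S" by blast
      have uV: "u \<in> ?V" using S(2) u by blast
      have u0: "u \<noteq> 0"
      proof
        assume "u = 0"
        with u f show False by simp
      qed
      have uL: "u \<in> ?L" using uV u0 by auto
      have z: "0 \<in> ?V - {w} - S" using f False n by auto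
      have "{0,u} = {u,0}" by (simp add: insert_commute)
      hence "{0,u} \<in> ?D" unfolding delta_w_def using star_in_E[OF uL] u z by blast
      thus ?thesis using that uL by blast
    qed
    have "{{0,k}} \<subseteq> ?D" using k(2) by blast
    from mono[OF this] have "sum (x_hat n) {{0,k}} \<le> sum (x_hat n) ?D" .
    thus ?thesis using x_star[OF n k(1)] by simp
  qed
qed

lemma feasible: assumes n: "n \<ge> 4" shows "set_pairs_feasible {0..<n} (inst_edges n) (x_hat n)"
proof -
  have 1: "\<forall>S. S \<noteq> {} \<and> S \<subset> {0..<n} \<longrightarrow> sum (x_hat n) (delta (inst_edges n) S) \<ge> 2"
    using feas_a[OF n] by blast
  have 2: "\<forall>w\<in>{0..<n}. \<forall>S. S \<noteq> {} \<and> S \<subset> {0..<n} - {w} \<longrightarrow> sum (x_hat n) (delta_w {0..<n} (inst_edges n) w S) \<ge> 1"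
    using feas_b[OF n] by blast
  have 3: "\<forall>e\<in>inst_edges n. 0 \<le> x_hat n e \<and> x_hat n e \<le> 1" by (simp add: x_hat_def)
  show ?thesis unfolding set_pairs_feasible_def using 1 2 3 by blast
qed

lemma cost_eq: assumes n: "n \<ge> 4"
  shows "lp_cost (inst_edges n) (inst_cost n) (x_hat n) = (real n - 1) / 2"
proof -
  have fin: "finite (star_edges n)" "finite (cycle_links n)" using finite_E unfolding inst_edges_def by auto
  have disj: "star_edges n \<inter> cycle_links n = {}" using star_not_link[OF n] by auto
  have "lp_cost (inst_edges n) (inst_cost n) (x_hat n)
      = (\<Sum>e\<in>star_edges n. inst_cost n e * x_hat n e) + (\<Sum>e\<in>cycle_links n. inst_cost n e * x_hat n e)"
    unfolding lp_cost_def inst_edges_def using sum.union_disjoint[OF fin disj] by blast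
  also have "(\<Sum>e\<in>star_edges n. inst_cost n e * x_hat n e) = 0"
    using star_not_link[OF n] by (auto simp: inst_cost_def)
  also have "(\<Sum>e\<in>cycle_links n. inst_cost n e * x_hat n e) = (\<Sum>e\<in>cycle_links n. 1/2)"
    using star_not_link[OF n] by (intro sum.cong) (auto simp: inst_cost_def x_hat_def)
  also have "\<dots> = real (n - 1) / 2" using card_links[OF n] by simp
  finally show ?thesis using n by (simp add: of_nat_diff)
qed

lemma lp_lower: assumes n: "n \<ge> 4" and f: "set_pairs_feasible {0..<n} (inst_edges n) x"
  shows "lp_cost (inst_edges n) (inst_cost n) x \<ge> 1"
proof -
  let ?V = "{0..<n}" and ?E = "inst_edges n"
  have L1: "1 \<in> {1..n-1}" and Ln: "n-1 \<in> {1..n-1}" using n by auto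
  have S: "{1} \<noteq> {} \<and> {1} \<subset> ?V - {0}"
  proof -
    have a: "1 \<in> {0..<n} - {0}" "(2::nat) \<in> {0..<n} - {0}" using n by auto
    have s: "{1::nat} \<subseteq> {0..<n} - {0}" using a(1) by simp
    have ne: "{1::nat} \<noteq> {0..<n} - {0}"
    proof
      assume "{1::nat} = {0..<n} - {0}"
      hence "(2::nat) \<in> {1}" using a(2) by simp
      thus False by simp
    qed
    show ?thesis using s ne by (simp add: psubset_eq)
  qed
  have V0: "0 \<in> ?V" using n by auto
  have f': "(\<forall>S. S \<noteq> {} \<and> S \<subset> ?V \<longrightarrow> sum x (delta ?E S) \<ge> 2) \<and>
     (\<forall>w\<in>?V. \<forall>S. S \<noteq> {} \<and> S \<subset> ?V - {w} \<longrightarrow> sum x (delta_w ?V ?E w S) \<ge> 1) \<and>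
     (\<forall>e\<in>?E. 0 \<le> x e \<and> x e \<le> 1)" using f unfolding set_pairs_feasible_def .
  have fw: "\<forall>w\<in>?V. \<forall>S. S \<noteq> {} \<and> S \<subset> ?V - {w} \<longrightarrow> sum x (delta_w ?V ?E w S) \<ge> 1"
    using conjunct1[OF conjunct2[OF f']] .
  have c1: "sum x (delta_w ?V ?E 0 {1}) \<ge> 1" using fw[rule_format, OF V0 S] .
  have nn: "\<forall>e\<in>?E. 0 \<le> x e" using conjunct2[OF conjunct2[OF f']] by blast
  let ?P = "{lnk n 1, lnk n (n-1)}"
  have PE: "?P \<subseteq> ?E" using lnk_in_E[OF n L1] lnk_in_E[OF n Ln] by blast
  have sub: "delta_w ?V ?E 0 {1} \<subseteq> ?P"
  proof
    fix e assume "e \<in> delta_w ?V ?E 0 {1}"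
    then obtain u v where e0: "e = {u, v}" "u \<in> {1}" "v \<in> ?V - {0} - {1}" "e \<in> ?E" unfolding delta_w_def by blast
    hence e: "e = {1, v}" "v \<in> ?V - {0} - {1}" "e \<in> ?E" by auto
    then consider (s) "e \<in> star_edges n" | (l) "e \<in> cycle_links n" unfolding inst_edges_def by blast
    thus "e \<in> ?P"
    proof cases
      case s
      then obtain k where "e = {0,k}" unfolding star_edges_def by blast
      hence "0 \<in> e" by simp
      hence False using e by auto
      thus ?thesis ..
    next
      case l
      hence "e \<in> lnk n ` {1..n-1}" using cycle_links_eq[OF n] by simp
      then obtain i where i: "i \<in> {1..n-1}" "e = lnk n i" by blast
      have "1 \<in> e" using e(1) by simp
      hence "1 \<in> {i, nxt n i}" using i(2) unfolding lnk_def by simp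
      hence "i = 1 \<or> nxt n i = 1" by auto
      moreover have "nxt n i = 1 \<Longrightarrow> i = n - 1"
      proof (rule ccontr)
        assume "nxt n i = 1" "i \<noteq> n - 1"
        hence "i + 1 = 1" unfolding nxt_def by simp
        thus False using i by simp
      qed
      ultimately have "i = 1 \<or> i = n - 1" by blast
      thus ?thesis using i(2) by blast
    qed
  qed
  have finP: "finite ?P" by simp
  have "sum x (delta_w ?V ?E 0 {1}) \<le> sum x ?P"
    by (rule sum_mono2[OF finP sub]) (use nn PE in blast)
  also have "sum x ?P = (\<Sum>e\<in>?P. inst_cost n e * x e)"
  proof (rule sum.cong)
    fix e assume "e \<in> ?P"
    moreover have "?P \<subseteq> cycle_links n" unfolding cycle_links_eq[OF n] using L1 Ln by (intro insert_subsetI imageI) auto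
    ultimately have "e \<in> cycle_links n" by blast
    thus "x e = inst_cost n e * x e" unfolding inst_cost_def by simp
  qed simp
  also have "\<dots> \<le> lp_cost ?E (inst_cost n) x" unfolding lp_cost_def
  proof (rule sum_mono2[OF finite_E PE])
    fix e assume "e \<in> ?E - ?P"
    hence "0 \<le> x e" using nn by blast
    moreover have "0 \<le> inst_cost n e" unfolding inst_cost_def by simp
    ultimately show "0 \<le> inst_cost n e * x e" by simp
  qed
  finally show ?thesis using c1 by linarith
qed

lemma hub_connected:
  assumes "c \<in> V" "\<forall>v\<in>V. (c, v) \<in> (adj_rel V F)\<^sup>* \<and> (v, c) \<in> (adj_rel V F)\<^sup>*"
  shows "connected_on V F"
  unfolding connected_on_def using assms by (meson rtrancl_trans)

lemma star_conn:
  assumes n: "n \<ge> 4" and w: "w \<noteq> 0"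
  shows "connected_on ({0..<n} - {w}) (inst_edges n)"
proof (rule hub_connected)
  let ?W = "{0..<n} - {w}"
  show "0 \<in> ?W" using n w by auto
  show "\<forall>v\<in>?W. (0, v) \<in> (adj_rel ?W (inst_edges n))\<^sup>* \<and> (v, 0) \<in> (adj_rel ?W (inst_edges n))\<^sup>*"
  proof
    fix v assume v: "v \<in> ?W"
    show "(0, v) \<in> (adj_rel ?W (inst_edges n))\<^sup>* \<and> (v, 0) \<in> (adj_rel ?W (inst_edges n))\<^sup>*"
    proof (cases "v = 0")
      case True thus ?thesis by simp
    next
      case False
      hence "v \<in> {1..n-1}" using v by auto
      hence "{0,v} \<in> inst_edges n" by (rule star_in_E)
      hence "(0,v) \<in> adj_rel ?W (inst_edges n)" "(v,0) \<in> adj_rel ?W (inst_edges n)"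
        unfolding adj_rel_def using v False w n by (auto simp: insert_commute)
      thus ?thesis by auto
    qed
  qed
qed

lemma leaf_conn:
  assumes n: "n \<ge> 4"
  shows "connected_on ({0..<n} - {0}) (inst_edges n)"
proof (rule hub_connected)
  let ?W = "{0..<n} - {0}"
  let ?R = "adj_rel ?W (inst_edges n)"
  show "1 \<in> ?W" using n by auto
  have step: "(k, k+1) \<in> ?R \<and> (k+1, k) \<in> ?R" if "1 \<le> k" "k < n - 1" for k
  proof -
    have "k \<in> {1..n-1}" using that by auto
    from lnk_in_E[OF n this] have "{k, k+1} \<in> inst_edges n" using that unfolding lnk_def nxt_def by auto
    thus ?thesis unfolding adj_rel_def using that by (auto simp: insert_commute)
  qed
  have "1 \<le> k \<Longrightarrow> k \<le> n - 1 \<Longrightarrow> (1, k) \<in> ?R\<^sup>* \<and> (k, 1) \<in> ?R\<^sup>*" for k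
  proof (induction k)
    case 0 thus ?case by simp
  next
    case (Suc k)
    show ?case
    proof (cases "k = 0")
      case True thus ?thesis by simp
    next
      case False
      hence ih: "(1, k) \<in> ?R\<^sup>* \<and> (k, 1) \<in> ?R\<^sup>*" using Suc by auto
      have "(k, Suc k) \<in> ?R \<and> (Suc k, k) \<in> ?R" using step[of k] False Suc by auto
      thus ?thesis using ih by (meson rtrancl_into_rtrancl converse_rtrancl_into_rtrancl)
    qed
  qed
  thus "\<forall>v\<in>?W. (1, v) \<in> ?R\<^sup>* \<and> (v, 1) \<in> ?R\<^sup>*" by auto
qed

lemma whole_2NCSS: assumes n: "n \<ge> 4" shows "is_2NCSS {0..<n} (inst_edges n) (inst_edges n)"
proof -
  have edges: "\<forall>e\<in>inst_edges n. \<exists>u v. e = {u, v} \<and> u \<noteq> v \<and> u \<in> {0..<n} \<and> v \<in> {0..<n}"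
  proof
    fix e assume "e \<in> inst_edges n"
    then consider (s) "e \<in> star_edges n" | (l) "e \<in> cycle_links n" unfolding inst_edges_def by auto
    thus "\<exists>u v. e = {u, v} \<and> u \<noteq> v \<and> u \<in> {0..<n} \<and> v \<in> {0..<n}"
    proof cases
      case s thus ?thesis unfolding star_edges_def by fastforce
    next
      case l
      then obtain i where i: "i \<in> {1..n-1}" "e = lnk n i" using cycle_links_eq[OF n] by auto
      thus ?thesis using nxt_range[OF n i(1)] unfolding lnk_def by fastforce
    qed
  qed
  have c0: "connected_on {0..<n} (inst_edges n)" using star_conn[OF n, of n] n by simp
  have cw: "\<forall>w\<in>{0..<n}. connected_on ({0..<n} - {w}) (inst_edges n)"
    using star_conn[OF n] leaf_conn[OF n] by metis
  show ?thesis unfolding is_2NCSS_def two_node_connected_def using edges c0 cw n by auto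
qed

theorem mainTheorem8:
  fixes n :: nat
  assumes "n \<ge> 4"
  shows "(\<forall>F. is_2NCSS {0..<n} (inst_edges n) F \<longrightarrow> sum (inst_cost n) F \<ge> real n - 2)
     \<and> set_pairs_feasible {0..<n} (inst_edges n) (x_hat n)
     \<and> lp_cost (inst_edges n) (inst_cost n) (x_hat n) = (real n - 1) / 2
     \<and> integrality_ratio {0..<n} (inst_edges n) (inst_cost n) \<ge> 2 * (real n - 2) / (real n - 1)"
proof -
  note n = assms
  let ?A = "opt_2NCSS {0..<n} (inst_edges n) (inst_cost n)"
  let ?B = "opt_set_pairs_LP {0..<n} (inst_edges n) (inst_cost n)"
  have lb: "\<forall>F. is_2NCSS {0..<n} (inst_edges n) F \<longrightarrow> sum (inst_cost n) F \<ge> real n - 2"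
    using lower_bound[OF n] by blast
  have A: "?A \<ge> real n - 2" unfolding opt_2NCSS_def
    using whole_2NCSS[OF n] lb by (intro cInf_greatest) auto
  have B1: "?B \<ge> 1" unfolding opt_set_pairs_LP_def
    using feasible[OF n] lp_lower[OF n] by (intro cInf_greatest) auto
  have B2: "?B \<le> (real n - 1) / 2" unfolding opt_set_pairs_LP_def
  proof (rule cInf_lower2)
    show "lp_cost (inst_edges n) (inst_cost n) (x_hat n) \<in> {lp_cost (inst_edges n) (inst_cost n) x |x. set_pairs_feasible {0..<n} (inst_edges n) x}"
      using feasible[OF n] by blast
    show "bdd_below {lp_cost (inst_edges n) (inst_cost n) x |x. set_pairs_feasible {0..<n} (inst_edges n) x}"
      using lp_lower[OF n] by (intro bdd_belowI[of _ 1]) auto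
  qed (simp add: cost_eq[OF n])
  have n2: "real n - 2 \<ge> 0" using n by simp
  have "2 * (real n - 2) / (real n - 1) = (real n - 2) / ((real n - 1) / 2)" by simp
  also have "\<dots> \<le> (real n - 2) / ?B" using B1 B2 n2 by (intro divide_left_mono) auto
  also have "\<dots> \<le> ?A / ?B" using A B1 by (intro divide_right_mono) auto
  finally have "integrality_ratio {0..<n} (inst_edges n) (inst_cost n) \<ge> 2 * (real n - 2) / (real n - 1)"
    unfolding integrality_ratio_def .
  thus ?thesis using lb feasible[OF n] cost_eq[OF n] by blast
qed

end
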